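(* Let $n \ge 2$ and let $\tilde{\mathcal{C}} = [\tilde{\mathbf{x}}_1, \ldots, \tilde{\mathbf{x}}_n]^\top \in \mathbb{R}^{n \times 3}$ be a set of coordinates with adjacency (pairwise distance) matrix $\tilde{d}$, i.e. $\tilde{d}_{ij} = \|\tilde{\mathbf{x}}_i - \tilde{\mathbf{x}}_j\|$. Fix indices $u \neq v$ in $\{1,\ldots,n\}$ with $\tilde{\mathbf{x}}_u \neq \tilde{\mathbf{x}}_v$, let $\delta > 0$, and let $\hat{d} = \tilde{d} + \delta \bar{e}_{uv}$, where $\bar{e}_{uv}$ is the $n\times n$ matrix whose $(u,v)$ and $(v,u)$ entries equal $1$ and all other entries equal $0$. Consider the optimization problem $$f(\hat{d}) \triangleq \min_{\hat{\mathcal{C}} = [\hat{\mathbf{x}}_1, \ldots, \hat{\mathbf{x}}_n]} \sum_{i<j} \left( \|\hat{\mathbf{x}}_i - \hat{\mathbf{x}}_j\| - \hat{d}_{ij} \right)^2 .$$ Define the approximate solution $\hat{\mathcal{C}} = \tilde{\mathcal{C}} + \frac{\delta}{2(n-1)} \frac{\partial \tilde{d}_{uv}}{\partial \tilde{\mathcal{C}}}$, i.e. $\hat{\mathbf{x}}_u = \tilde{\mathbf{x}}_u + \frac{\delta}{2(n-1)}\boldsymbol{\lambda}_{uv}$, $\hat{\mathbf{x}}_v = \tilde{\mathbf{x}}_v - \frac{\delta}{2(n-1)}\boldsymbol{\lambda}_{uv}$, and $\hat{\mathbf{x}}_w = \tilde{\mathbf{x}}_w$ for $w \neq u,v$, where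 $\boldsymbol{\lambda}_{uv} = \frac{\tilde{\mathbf{x}}_u - \tilde{\mathbf{x}}_v}{\|\tilde{\mathbf{x}}_u - \tilde{\mathbf{x}}_v\|}$. Then the objective value at this approximate solution satisfies $$\sum_{i<j} \left( \|\hat{\mathbf{x}}_i - \hat{\mathbf{x}}_j\| - \hat{d}_{ij} \right)^2 \le \frac{2n^2 - 7n + 6}{2(n-1)^2}\,\delta^2,$$ and in particular $f(\hat{d}) \le \frac{2n^2 - 7n + 6}{2(n-1)^2}\,\delta^2$.
   Context: Norms $\|\cdot\|$ on vectors in $\mathbb{R}^3$ are Euclidean. $\frac{\partial \tilde{d}_{uv}}{\partial \tilde{\mathcal{C}}}$ denotes the $n\times 3$ matrix of partial derivatives of $\tilde{d}_{uv} = \|\tilde{\mathbf{x}}_u - \tilde{\mathbf{x}}_v\|$ with respect to the rows of $\tilde{\mathcal{C}}$: its row $u$ is $\boldsymbol{\lambda}_{uv}$, its row $v$ is $-\boldsymbol{\lambda}_{uv}$, and all other rows are zero. *)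

theory Defs
  imports "HOL-Analysis.Analysis"
begin

text \<open>Configurations of n points in R^3 are maps from indices {1..n} to real^3
  (values outside {1..n} are irrelevant). Distance-like matrices are maps nat => nat => real.\<close>

definition adj_matrix :: "(nat \<Rightarrow> real^3) \<Rightarrow> nat \<Rightarrow> nat \<Rightarrow> real" where
  "adj_matrix C i j = norm (C i - C j)"

definition ebar :: "nat \<Rightarrow> nat \<Rightarrow> nat \<Rightarrow> nat \<Rightarrow> real" where
  "ebar u v i j = (if (i = u \<and> j = v) \<or> (i = v \<and> j = u) then 1 else 0)"

definition lambda_uv :: "(nat \<Rightarrow> real^3) \<Rightarrow> nat \<Rightarrow> nat \<Rightarrow> real^3" where
  "lambda_uv C u v = (C u - C v) /\<^sub>R norm (C u - C v)"

definition stress :: "nat \<Rightarrow> (nat \<Rightarrow> nat \<Rightarrow> real) \<Rightarrow> (nat \<Rightarrow> real^3) \<Rightarrow> real" where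
  "stress n d C = (\<Sum>(i,j)\<in>{(i,j). 1 \<le> i \<and> i < j \<and> j \<le> n}. (norm (C i - C j) - d i j)^2)"

definition f_opt :: "nat \<Rightarrow> (nat \<Rightarrow> nat \<Rightarrow> real) \<Rightarrow> real" where
  "f_opt n d = (INF C. stress n d C)"

end

theory Submission
  imports Defs
begin

theorem theorem4p1:
  fixes n :: nat and x :: "nat \<Rightarrow> real^3" and u v :: nat and \<delta> :: real
  assumes "n \<ge> 2"
    and "u \<in> {1..n}" and "v \<in> {1..n}" and "u \<noteq> v"
    and "x u \<noteq> x v"
    and "\<delta> > 0"
  defines "dhat \<equiv> (\<lambda>i j. adj_matrix x i j + \<delta> * ebar u v i j)"
    and "xhat \<equiv> (\<lambda>w. if w = u then x u + (\<delta> / (2 * (real n - 1))) *\<^sub>R lambda_uv x u v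
                      else if w = v then x v - (\<delta> / (2 * (real n - 1))) *\<^sub>R lambda_uv x u v
                      else x w)"
  shows "stress n dhat xhat \<le> (2 * real n ^ 2 - 7 * real n + 6) / (2 * (real n - 1) ^ 2) * \<delta> ^ 2
       \<and> f_opt n dhat \<le> (2 * real n ^ 2 - 7 * real n + 6) / (2 * (real n - 1) ^ 2) * \<delta> ^ 2"
proof -
  define c where "c = \<delta> / (2 * (real n - 1))"
  define l where "l = lambda_uv x u v"
  define D where "D = norm (x u - x v)"
  have Dpos: "D > 0" using assms(5) by (simp add: D_def)
  have n1: "real n - 1 > 0" using assms(1) by simp
  have cpos: "c > 0" using assms(6) n1 by (simp add: c_def)
  have nl: "norm l = 1" using assms(5) by (simp add: l_def lambda_uv_def)
  have xh: "xhat = (\<lambda>w. if w = u then x u + c *\<^sub>R l else if w = v then x v - c *\<^sub>R l else x w)"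
    unfolding xhat_def c_def l_def by (rule refl)
  define T where "T = (\<lambda>(i,j). (norm (xhat i - xhat j) - dhat i j)^2)"
  define S where "S = {(i,j). 1 \<le> i \<and> i < j \<and> j \<le> n}"
  have st: "stress n dhat xhat = sum T S" by (simp add: stress_def T_def S_def)
  have Tsym: "T (i,j) = T (j,i)" for i j
    by (simp add: T_def dhat_def adj_matrix_def ebar_def norm_minus_commute conj_commute disj_commute)
  have Tnn: "T p \<ge> 0" for p by (cases p) (simp add: T_def)
  have finS: "finite S"
    by (rule finite_subset[of _ "{1..n} \<times> {1..n}"]) (auto simp: S_def)
  define W where "W = {1..n} - {u,v}"
  have cardW: "card W = n - 2" using assms(2,3,4) by (simp add: W_def card_Diff_subset)
  define A where "A = (\<lambda>a. (\<lambda>w. (min a w, max a w)) ` W)"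
  define P where "P = (min u v, max u v)"
  have Tuv: "T P = (2*c - \<delta>)^2"
  proof -
    have t1: "T P = T (u,v)" using Tsym by (cases "u < v") (auto simp: P_def min_def max_def)
    have e1: "xhat u - xhat v = (x u - x v) + c *\<^sub>R l + c *\<^sub>R l"
      using assms(4) by (simp add: xh)
    have e2: "l = (1/D) *\<^sub>R (x u - x v)"
      by (simp add: l_def lambda_uv_def D_def divide_inverse_commute)
    have "xhat u - xhat v = (1 + 2*c/D) *\<^sub>R (x u - x v)"
    proof -
      have g: "y + c *\<^sub>R ((1/D) *\<^sub>R y) + c *\<^sub>R ((1/D) *\<^sub>R y) = (1 + 2*c/D) *\<^sub>R y" for y :: "real^3"
      proof -
        have "(1 + 2*c/D) = 1 + c/D + c/D" by simp
        hence "(1 + 2*c/D) *\<^sub>R y = 1 *\<^sub>R y + (c/D) *\<^sub>R y + (c/D) *\<^sub>R y"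
          by (simp only: scaleR_left_distrib)
        thus ?thesis by simp
      qed
      show ?thesis using e1 e2 g[of "x u - x v"] by metis
    qed
    hence t2: "norm (xhat u - xhat v) = D + 2*c"
      using Dpos cpos by (simp add: D_def[symmetric] distrib_right)
    have t3: "dhat u v = D + \<delta>" by (simp add: dhat_def adj_matrix_def ebar_def D_def)
    show ?thesis unfolding t1 by (simp add: T_def t2 t3 power2_eq_square algebra_simps)
  qed
  have Tuw: "T (min a w, max a w) \<le> c^2" if a: "a = u \<or> a = v" and w: "w \<in> W" for a w
  proof -
    have "T (min a w, max a w) = T (a, w)" using Tsym by (cases "a < w") (auto simp: min_def max_def)
    moreover have "dhat a w = norm (x a - x w)" using w a by (auto simp: dhat_def adj_matrix_def ebar_def W_def)
    moreover have "\<bar>norm (xhat a - xhat w) - norm (x a - x w)\<bar> \<le> c"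
    proof -
      have "\<bar>norm (xhat a - xhat w) - norm (x a - x w)\<bar> \<le> norm ((xhat a - xhat w) - (x a - x w))"
        by (rule norm_triangle_ineq3)
      also have "(xhat a - xhat w) - (x a - x w) = (if a = u then c *\<^sub>R l else - (c *\<^sub>R l))"
        using a w assms(4) by (auto simp: xh W_def)
      also have "norm \<dots> = c" using nl cpos by simp
      finally show ?thesis .
    qed
    ultimately show ?thesis unfolding T_def using cpos
      by (simp add: abs_le_square_iff[symmetric] del: abs_le_square_iff)
  qed
  have Azero: "T p = 0" if "p \<in> S - ({P} \<union> A u \<union> A v)" for p
  proof -
    obtain i j where p: "p = (i,j)" by (cases p)
    have ij: "1 \<le> i" "i < j" "j \<le> n" using that p by (auto simp: S_def)
    have nt: "i \<noteq> u \<and> i \<noteq> v \<and> j \<noteq> u \<and> j \<noteq> v"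
    proof (rule ccontr)
      assume nn: "\<not> ?thesis"
      have mem: "(min a w, max a w) \<in> A a" if "w \<in> W" for a w
        using that unfolding A_def by blast
      have "p \<in> {P} \<union> A u \<union> A v"
      proof -
        consider "i = u \<and> j = v" | "i = v \<and> j = u" | "i = u \<and> j \<noteq> v" | "i = v \<and> j \<noteq> u"
          | "j = u \<and> i \<noteq> v" | "j = v \<and> i \<noteq> u" using nn by blast
        thus ?thesis
        proof cases
          case 1 thus ?thesis using ij by (simp add: p P_def)
        next
          case 2 thus ?thesis using ij by (simp add: p P_def)
        next
          case 3 hence "j \<in> W" using ij by (auto simp: W_def)
          thus ?thesis using mem[of j u] 3 ij by (simp add: p)
        next
          case 4 hence "j \<in> W" using ij by (auto simp: W_def)
          thus ?thesis using mem[of j v] 4 ij by (simp add: p)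
        next
          case 5 hence "i \<in> W" using ij by (auto simp: W_def)
          thus ?thesis using mem[of i u] 5 ij by (simp add: p)
        next
          case 6 hence "i \<in> W" using ij by (auto simp: W_def)
          thus ?thesis using mem[of i v] 6 ij by (simp add: p)
        qed
      qed
      thus False using that by blast
    qed
    thus ?thesis by (simp add: p T_def xh dhat_def adj_matrix_def ebar_def)
  qed
  have finA: "finite (A a)" for a by (simp add: A_def W_def)
  have sumA: "sum T (A a) \<le> (real n - 2) * c^2" if a: "a = u \<or> a = v" for a
  proof -
    have inj: "inj_on (\<lambda>w. (min a w, max a w)) W"
      by (rule inj_onI) (auto simp: min_def max_def split: if_splits)
    have "sum T (A a) = (\<Sum>w\<in>W. T (min a w, max a w))"
      unfolding A_def by (subst sum.reindex[OF inj]) simp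
    also have "\<dots> \<le> (\<Sum>w\<in>W. c^2)" by (rule sum_mono) (use Tuw a in auto)
    also have "\<dots> = (real n - 2) * c^2" using cardW assms(1) by (simp add: of_nat_diff)
    finally show ?thesis .
  qed
  have sub: "{P} \<union> A u \<union> A v \<subseteq> S"
    using assms(2,3,4) by (auto simp: P_def A_def W_def S_def min_def max_def)
  have "sum T S = sum T ({P} \<union> A u \<union> A v)"
    by (rule sum.mono_neutral_right[OF finS sub]) (use Azero in auto)
  also have "\<dots> \<le> sum T {P} + sum T (A u) + sum T (A v)"
  proof -
    have le: "sum T (X \<union> Y) \<le> sum T X + sum T Y" if "finite X" "finite Y" for X Y
      using sum_Un[OF that, of T] sum_nonneg[of "X \<inter> Y" T] Tnn by simp
    show ?thesis using le[of "{P} \<union> A u" "A v"] le[of "{P}" "A u"] finA by simp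
  qed
  also have "\<dots> \<le> (2*c - \<delta>)^2 + (real n - 2) * c^2 + (real n - 2) * c^2"
    using sumA Tuv by (intro add_mono) auto
  also have "\<dots> = (2 * real n ^ 2 - 7 * real n + 6) / (2 * (real n - 1) ^ 2) * \<delta> ^ 2"
  proof -
    define m where "m = real n - 1"
    have m0: "m \<noteq> 0" using n1 by (simp add: m_def)
    have rn: "real n = m + 1" by (simp add: m_def)
    show ?thesis unfolding c_def rn m_def[symmetric] using m0
      by (simp add: field_simps power2_eq_square)
  qed
  finally have main: "stress n dhat xhat \<le> (2 * real n ^ 2 - 7 * real n + 6) / (2 * (real n - 1) ^ 2) * \<delta> ^ 2"
    using st by simp
  have "f_opt n dhat \<le> stress n dhat xhat"
    unfolding f_opt_def
    by (rule cINF_lower) (auto simp: bdd_below_def stress_def intro!: exI[of _ 0] sum_nonneg)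
  with main show ?thesis by simp
qed

end
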